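(* Let $0<b<1$ and let $\infty U$ denote the generic random tree measure associated with the generalised uniform offspring distribution $p^U_0=b$, $p^U_k=b^{k-1}(1-b)^2$ ($k\ge1$). Then for every $k\ge1$, $$\mathbb{E}_{\infty U}\big[|D_k|^{-1}\big]=\frac{1}{1+(k-1)b(1-b)^{-1}}=\frac{1}{1+{f^U}''(1)(k-1)/2},$$ where $f^U(x)=\sum_kp^U_kx^k$.
   Context: Trees are planar rooted trees with root of degree $1$; $D_k(T)$ is the set of edges joining vertices at height $k-1$ to vertices at height $k$ (height = graph distance from the root). The Galton–Watson tree starts with a single individual at height $1$ attached to the root, individuals independently having $j$ children with probability $p_j$. The generic random tree measure $\infty U$ is the weak limit as $N\to\infty$ of the Galton–Watson measure conditioned to have $N$ edges (equivalently, the Galton–Watson process with distribution $p^U$ conditioned never to die out); it is concentrated on infinite trees with a unique infinite spine. *)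

theory Defs
  imports "HOL-Analysis.Analysis"
begin

text \<open>Finite planar rooted trees: a vertex is given by the ordered list of its children.\<close>
datatype ptree = Node "ptree list"

fun edges :: "ptree \<Rightarrow> nat" where
  "edges (Node cs) = length cs + sum_list (map edges cs)"

text \<open>Number of vertices at height k (graph distance from the root).  For k \<ge> 1 this is
  the cardinality of D_k(T), the set of edges joining height k-1 to height k.\<close>
fun level :: "nat \<Rightarrow> ptree \<Rightarrow> nat" where
  "level 0 t = 1"
| "level (Suc k) (Node cs) = sum_list (map (level k) cs)"

abbreviation Dcard :: "nat \<Rightarrow> ptree \<Rightarrow> nat" where
  "Dcard k T \<equiv> level k T"

fun gw_weight :: "(nat \<Rightarrow> real) \<Rightarrow> ptree \<Rightarrow> real" where
  "gw_weight p (Node cs) = p (length cs) * prod_list (map (gw_weight p) cs)"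

text \<open>Galton--Watson measure on trees whose root has degree 1: one individual at height 1
  attached to the root.\<close>
definition gw :: "(nat \<Rightarrow> real) \<Rightarrow> ptree \<Rightarrow> real" where
  "gw p T = (case T of Node [t] \<Rightarrow> gw_weight p t | _ \<Rightarrow> 0)"

definition gw_cond_exp :: "(nat \<Rightarrow> real) \<Rightarrow> nat \<Rightarrow> (ptree \<Rightarrow> real) \<Rightarrow> real" where
  "gw_cond_exp p N f =
     (\<Sum>T\<in>{T. edges T = N}. gw p T * f T) / (\<Sum>T\<in>{T. edges T = N}. gw p T)"

definition pU :: "real \<Rightarrow> nat \<Rightarrow> real" where
  "pU b k = (if k = 0 then b else b ^ (k - 1) * (1 - b)^2)"

definition fU :: "real \<Rightarrow> real \<Rightarrow> real" where
  "fU b x = (\<Sum>k. pU b k * x ^ k)"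

end

theory Submission
  imports Defs
begin


definition EL :: "ptree list \<Rightarrow> nat" where "EL cs = sum_list (map edges cs)"
definition LL :: "nat \<Rightarrow> ptree list \<Rightarrow> nat" where "LL j cs = sum_list (map (level j) cs)"
definition WL :: "(nat \<Rightarrow> real) \<Rightarrow> ptree list \<Rightarrow> real" where "WL p cs = prod_list (map (gw_weight p) cs)"
definition TS :: "nat \<Rightarrow> ptree set" where "TS n = {t. edges t = n}"
definition FS :: "nat \<Rightarrow> nat \<Rightarrow> ptree list set" where "FS d n = {cs. length cs = d \<and> EL cs = n}"

lemma EL_simps[simp]: "EL [] = 0" "EL (c#cs) = edges c + EL cs" by (auto simp: EL_def)
lemma LL_simps[simp]: "LL j [] = 0" "LL j (c#cs) = level j c + LL j cs" by (auto simp: LL_def)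
lemma WL_simps[simp]: "WL p [] = 1" "WL p (c#cs) = gw_weight p c * WL p cs" by (auto simp: WL_def)

lemma edges_Node: "edges (Node cs) = length cs + EL cs" by (simp add: EL_def)
lemma level_Suc_Node: "level (Suc j) (Node cs) = LL j cs" by (simp add: LL_def)
lemma weight_Node: "gw_weight p (Node cs) = p (length cs) * WL p cs" by (simp add: WL_def)

lemma finite_TS: "finite (TS n)"
proof (induction n rule: less_induct)
  case (less n)
  have "TS n \<subseteq> Node ` {cs. set cs \<subseteq> (\<Union>i<n. TS i) \<and> length cs \<le> n}"
  proof
    fix t assume "t \<in> TS n"
    then obtain cs where t: "t = Node cs" and e: "length cs + EL cs = n"
      by (cases t) (auto simp: TS_def EL_def)
    have "set cs \<subseteq> (\<Union>i<n. TS i)"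
    proof
      fix c assume c: "c \<in> set cs"
      have "edges c \<le> EL cs" unfolding EL_def using c by (simp add: member_le_sum_list)
      moreover have "length cs \<ge> 1" using c by (cases cs) auto
      ultimately show "c \<in> (\<Union>i<n. TS i)" using e by (auto simp: TS_def)
    qed
    then show "t \<in> Node ` {cs. set cs \<subseteq> (\<Union>i<n. TS i) \<and> length cs \<le> n}" using t e by auto
  qed
  moreover have "finite {cs. set cs \<subseteq> (\<Union>i<n. TS i) \<and> length cs \<le> n}"
    by (rule finite_lists_length_le) (use less in auto)
  ultimately show ?case by (meson finite_imageI finite_subset)
qed

lemma finite_FS: "finite (FS d n)"
proof -
  have "FS d n \<subseteq> {cs. set cs \<subseteq> (\<Union>i\<le>n. TS i) \<and> length cs = d}"
  proof
    fix cs assume "cs \<in> FS d n"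
    then have "length cs = d" "EL cs = n" by (auto simp: FS_def)
    moreover have "set cs \<subseteq> (\<Union>i\<le>n. TS i)"
    proof
      fix c assume c: "c \<in> set cs"
      have "edges c \<le> EL cs" unfolding EL_def using c by (simp add: member_le_sum_list)
      then show "c \<in> (\<Union>i\<le>n. TS i)" using \<open>EL cs = n\<close> by (auto simp: TS_def)
    qed
    ultimately show "cs \<in> {cs. set cs \<subseteq> (\<Union>i\<le>n. TS i) \<and> length cs = d}" by auto
  qed
  moreover have "finite {cs. set cs \<subseteq> (\<Union>i\<le>n. TS i) \<and> length cs = d}"
    by (rule finite_lists_length_eq) (auto intro: finite_TS)
  ultimately show ?thesis by (rule finite_subset)
qed

definition aa :: "(nat \<Rightarrow> real) \<Rightarrow> nat \<Rightarrow> real" where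
  "aa p n = (\<Sum>t\<in>TS n. gw_weight p t)"
definition Phi :: "(nat \<Rightarrow> real) \<Rightarrow> nat \<Rightarrow> nat \<Rightarrow> nat \<Rightarrow> real" where
  "Phi p j n m = (\<Sum>t\<in>{t\<in>TS n. level j t = m}. gw_weight p t)"
definition Psi :: "(nat \<Rightarrow> real) \<Rightarrow> nat \<Rightarrow> nat \<Rightarrow> nat \<Rightarrow> nat \<Rightarrow> real" where
  "Psi p j d n m = (\<Sum>cs\<in>{cs\<in>FS d n. LL j cs = m}. WL p cs)"

lemma Phi_Suc: "Phi p (Suc j) n m = (\<Sum>d\<le>n. p d * Psi p j d (n-d) m)"
proof -
  have "Phi p (Suc j) n m = (\<Sum>(d,cs)\<in>Sigma {..n} (\<lambda>d. {cs\<in>FS d (n-d). LL j cs = m}). p d * WL p cs)"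
    unfolding Phi_def
    apply (rule sum.reindex_bij_witness[where i = "\<lambda>(d,cs). Node cs" and j = "\<lambda>t. case t of Node cs \<Rightarrow> (length cs, cs)"])
    apply (auto simp: FS_def TS_def EL_def LL_def WL_def split: ptree.splits)
    done
  also have "\<dots> = (\<Sum>d\<le>n. \<Sum>cs\<in>{cs\<in>FS d (n-d). LL j cs = m}. p d * WL p cs)"
    by (rule sum.Sigma[symmetric]) (auto intro: finite_subset[OF _ finite_FS])
  also have "\<dots> = (\<Sum>d\<le>n. p d * Psi p j d (n-d) m)"
    by (simp add: Psi_def sum_distrib_left)
  finally show ?thesis .
qed

lemma finite_TS_filter[simp]: "finite {t\<in>TS i. P t}"
  by (rule finite_subset[OF _ finite_TS]) auto
lemma finite_FS_filter[simp]: "finite {t\<in>FS d i. P t}"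
  by (rule finite_subset[OF _ finite_FS]) auto

lemma Psi_Suc: "Psi p j (Suc d) n m = (\<Sum>i\<le>n. \<Sum>m1\<le>m. Phi p j i m1 * Psi p j d (n-i) (m-m1))"
proof -
  define B where "B = (\<lambda>x. {t\<in>TS (fst x). level j t = snd x} \<times> {cs\<in>FS d (n - fst x). LL j cs = m - snd x})"
  have "Psi p j (Suc d) n m = (\<Sum>z\<in>Sigma ({..n}\<times>{..m}) B. gw_weight p (fst (snd z)) * WL p (snd (snd z)))"
    unfolding Psi_def B_def
    apply (rule sum.reindex_bij_witness[where i = "\<lambda>z. fst (snd z) # snd (snd z)" and j = "\<lambda>cs. ((edges (hd cs), level j (hd cs)), (hd cs, tl cs))"])
    apply (auto simp: FS_def TS_def neq_Nil_conv length_Suc_conv)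
    done
  also have "\<dots> = (\<Sum>x\<in>{..n}\<times>{..m}. \<Sum>y\<in>B x. gw_weight p (fst y) * WL p (snd y))"
    by (subst sum.Sigma) (auto simp: split_def B_def)
  also have "\<dots> = (\<Sum>x\<in>{..n}\<times>{..m}. Phi p j (fst x) (snd x) * Psi p j d (n - fst x) (m - snd x))"
    unfolding Phi_def Psi_def B_def
    by (rule sum.cong[OF refl]) (simp add: sum_product sum.cartesian_product split_def)
  also have "\<dots> = (\<Sum>i\<le>n. \<Sum>m1\<le>m. Phi p j i m1 * Psi p j d (n-i) (m-m1))"
    by (simp add: sum.cartesian_product split_def)
  finally show ?thesis .
qed

lemma TS_0: "TS 0 = {Node []}"
  by (auto simp: TS_def) (metis edges.simps list.size(3) ptree.exhaust add_is_0 length_0_conv)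

lemma FS_0: "FS 0 n = (if n = 0 then {[]} else {})"
  by (auto simp: FS_def)

lemma Phi_0: "Phi p 0 n m = (if m = 1 then aa p n else 0)"
  by (simp add: Phi_def aa_def)

lemma Psi_0: "Psi p j 0 n m = (if n = 0 \<and> m = 0 then 1 else 0)"
proof -
  have "{cs \<in> FS 0 n. LL j cs = m} = (if n=0 \<and> m=0 then {[]} else {})" by (auto simp: FS_def)
  then show ?thesis by (simp add: Psi_def)
qed

lemma aa_0: "aa p 0 = p 0"
  by (simp add: aa_def TS_0)

lemma aa_Suc:
  assumes pb: "\<And>k. p (Suc (Suc k)) = b * p (Suc k)"
  shows "aa p (Suc n) = b * (\<Sum>i\<le>n. aa p i * aa p (n-i)) + (p 1 - b * p 0) * aa p n"
proof -
  have "aa p (Suc n) = (\<Sum>(i,(c,t))\<in>Sigma {..n} (\<lambda>i. TS i \<times> TS (n-i)). gw_weight p c * (b * gw_weight p t + (if t = Node [] then p 1 - b * p 0 else 0)))"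
    unfolding aa_def
  proof (rule sum.reindex_bij_witness[where i = "\<lambda>(i,(c,t)). case t of Node cs \<Rightarrow> Node (c#cs)" and j = "\<lambda>t. case t of Node cs \<Rightarrow> (edges (hd cs), (hd cs, Node (tl cs)))"])
    fix t assume t: "t \<in> TS (Suc n)"
    obtain cs where tc: "t = Node cs" by (cases t)
    with t have "cs \<noteq> []" by (auto simp: TS_def)
    then obtain c cs' where cs: "cs = c # cs'" by (cases cs) auto
    show "(case case t of Node cs \<Rightarrow> (edges (hd cs), hd cs, Node (tl cs)) of (i, c, t) \<Rightarrow> (case t of Node cs \<Rightarrow> Node (c # cs))) = t"
      using tc cs by simp
    show "(case t of Node cs \<Rightarrow> (edges (hd cs), hd cs, Node (tl cs))) \<in> (SIGMA i:{..n}. TS i \<times> TS (n - i))"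
      using tc cs t by (auto simp: TS_def)
    have "gw_weight p (Node (c # cs')) = gw_weight p c * (b * gw_weight p (Node cs') + (if Node cs' = Node [] then p 1 - b * p 0 else 0))"
    proof (cases cs')
      case Nil then show ?thesis by simp
    next
      case (Cons x xs)
      then show ?thesis by (simp add: pb)
    qed
    then show "(case case t of Node cs \<Rightarrow> (edges (hd cs), hd cs, Node (tl cs)) of
          (i, c, t) \<Rightarrow> gw_weight p c * (b * gw_weight p t + (if t = Node [] then p 1 - b * p 0 else 0))) = gw_weight p t"
      using tc cs by (simp del: gw_weight.simps)
  next
    fix x assume x: "x \<in> (SIGMA i:{..n}. TS i \<times> TS (n - i))"
    obtain i c t where xx: "x = (i,(c,t))" by (cases x) auto
    obtain cs where tc: "t = Node cs" by (cases t)
    show "(case case x of (i, c, t) \<Rightarrow> (case t of Node cs \<Rightarrow> Node (c # cs)) of Node cs \<Rightarrow> (edges (hd cs), hd cs, Node (tl cs))) = x"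
      using x xx tc by (auto simp: TS_def)
    show "(case x of (i, c, t) \<Rightarrow> (case t of Node cs \<Rightarrow> Node (c # cs))) \<in> TS (Suc n)"
      using x xx tc by (auto simp: TS_def)
  qed
  also have "\<dots> = (\<Sum>i\<le>n. \<Sum>(c,t)\<in>TS i \<times> TS (n-i). gw_weight p c * (b * gw_weight p t + (if t = Node [] then p 1 - b * p 0 else 0)))"
    by (rule sum.Sigma[symmetric]) (auto intro: finite_TS)
  also have "\<dots> = (\<Sum>i\<le>n. aa p i * (b * aa p (n-i) + (if i = n then p 1 - b * p 0 else 0)))"
  proof (rule sum.cong[OF refl])
    fix i assume i: "i \<in> {..n}"
    have "(\<Sum>t\<in>TS (n-i). (if t = Node [] then p 1 - b * p 0 else 0)) = (if i = n then p 1 - b * p 0 else 0)"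
    proof (cases "i = n")
      case True then show ?thesis by (simp add: TS_0)
    next
      case False
      then have "Node [] \<notin> TS (n-i)" using i by (auto simp: TS_def)
      then show ?thesis using False by (auto intro!: sum.neutral)
    qed
    then show "(\<Sum>(c,t)\<in>TS i \<times> TS (n-i). gw_weight p c * (b * gw_weight p t + (if t = Node [] then p 1 - b * p 0 else 0))) =
       aa p i * (b * aa p (n-i) + (if i = n then p 1 - b * p 0 else 0))"
      unfolding aa_def sum_product[symmetric] sum.cartesian_product[symmetric]
      by (simp add: sum.distrib sum_distrib_left)
  qed
  also have "\<dots> = (\<Sum>i\<le>n. b * (aa p i * aa p (n-i)) + (if i = n then (p 1 - b * p 0) * aa p i else 0))"
    by (rule sum.cong) (auto simp: algebra_simps)
  also have "\<dots> = b * (\<Sum>i\<le>n. aa p i * aa p (n-i)) + (p 1 - b * p 0) * aa p n"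
    by (simp add: sum.distrib sum_distrib_left)
  finally show ?thesis .
qed


lemma gw_weight_nonneg: "(\<And>k. p k \<ge> 0) \<Longrightarrow> gw_weight p t \<ge> 0"
proof (induction t)
  case (Node cs)
  then show ?case by (auto intro!: mult_nonneg_nonneg prod_list_nonneg)
qed

lemma WL_nonneg: "(\<And>k. p k \<ge> 0) \<Longrightarrow> WL p cs \<ge> 0"
  by (auto simp: WL_def intro!: prod_list_nonneg gw_weight_nonneg)

locale gwU =
  fixes b :: real
  assumes b0: "0 < b" and b1: "b < 1"
begin

abbreviation "p \<equiv> pU b"
definition "a n = aa p n"

lemma p_nonneg: "p k \<ge> 0"
  using b0 b1 by (auto simp: pU_def)
lemma p_0: "p 0 = b" by (simp add: pU_def)
lemma p_Suc: "p (Suc k) = b ^ k * (1-b)^2" by (simp add: pU_def)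
lemma p_SS: "p (Suc (Suc k)) = b * p (Suc k)" by (simp add: pU_def)

lemma a_nonneg: "a n \<ge> 0"
  by (auto simp: a_def aa_def intro!: sum_nonneg gw_weight_nonneg p_nonneg)

lemma a0: "a 0 = b" by (simp add: a_def aa_0 p_0)

lemma a_Suc: "a (Suc n) = (1 - 2*b) * a n + b * (\<Sum>i\<le>n. a i * a (n-i))"
  unfolding a_def using aa_Suc[of p b n, OF p_SS] by (simp add: p_Suc p_0 algebra_simps power2_eq_square)

definition "AF = Abs_fps a"

lemma AF_eq: "AF = fps_const b + fps_const (1-2*b) * (fps_X * AF) + fps_const b * (fps_X * AF^2)"
proof (rule fps_ext)
  fix n show "fps_nth AF n = fps_nth (fps_const b + fps_const (1-2*b) * (fps_X * AF) + fps_const b * (fps_X * AF^2)) n"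
  proof (cases n)
    case 0 then show ?thesis by (simp add: AF_def a0)
  next
    case (Suc k)
    have sq: "fps_nth (AF^2) k = (\<Sum>i\<le>k. a i * a (k-i))"
      by (simp add: AF_def power2_eq_square fps_mult_nth atLeast0AtMost)
    show ?thesis using Suc by (simp add: sq) (simp add: AF_def a_Suc)
  qed
qed

definition "ss = 1 - 2*b + 2*b^2"
definition "cc = (1-2*b)^2"

lemma ringlem1: fixes A X B :: "'a::comm_ring_1" assumes "A = B + (1-2*B)*X*A + B*X*A^2"
  shows "(2*B*X*A - 1 + (1-2*B)*X)^2 = (1 - (1-2*B)*X)^2 - 4*B^2*X"
proof -
  have "(2*B*X*A - 1 + (1-2*B)*X)^2 - ((1 - (1-2*B)*X)^2 - 4*B^2*X) = 4*B*X*(B + (1-2*B)*X*A + B*X*A^2 - A)"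
    by (simp add: algebra_simps power2_eq_square)
  then show ?thesis using assms by simp
qed

lemma ringlem2: fixes Q D Qd Dd :: "'a::comm_ring_1" assumes "Q^2 = D" "Dd = Q*Qd + Qd*Q"
  shows "2 * D * Qd = Q * Dd"
proof -
  have "2*D*Qd = 2*(Q*Q)*Qd" using assms(1) by (simp add: power2_eq_square)
  also have "\<dots> = Q*Dd" using assms(2) by (simp add: algebra_simps)
  finally show ?thesis .
qed

lemma ringlem3: fixes X B :: "'a::comm_ring_1"
  shows "(1 - (1-2*B)*X)^2 - 4*B^2*X = 1 - (2 - 4*B + 4*B^2)*X + (1-2*B)^2*X^2"
  by (simp add: algebra_simps power2_eq_square)

lemma rec3: "real (n+3) * a (n+2) = ss * real (2*n+3) * a (n+1) - cc * real n * a n"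
proof -
  define B where "B = fps_const b"
  define Q where "Q = 2*B*fps_X*AF - 1 + (1-2*B)*fps_X"
  define D where "D = (1 - (1-2*B)*fps_X)^2 - 4*B^2*fps_X"
  have c1: "fps_const (1-2*b) = 1 - 2*B" by (simp add: B_def numeral_fps_const)
  have E: "AF = B + (1-2*B)*fps_X*AF + B*fps_X*AF^2"
    using AF_eq unfolding c1 B_def[symmetric] by (simp add: algebra_simps)
  have QD: "Q^2 = D"
    unfolding Q_def D_def by (rule ringlem1[OF E])
  have key: "2 * D * fps_deriv Q = Q * fps_deriv D"
    by (rule ringlem2[OF QD]) (simp add: QD[symmetric] power2_eq_square)
  have k1: "(2::real fps) - 4*B + 4*B^2 = fps_const (2 * ss)"
    by (simp add: B_def ss_def numeral_fps_const power2_eq_square algebra_simps)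
  have k2: "(1 - 2*B)^2 = fps_const cc"
    by (simp add: B_def cc_def numeral_fps_const power2_eq_square algebra_simps)
  have Dpoly: "D = 1 - fps_const (2 * ss) * fps_X + fps_const cc * fps_X^2"
    unfolding D_def ringlem3 k1 k2 ..
  have Dn: "fps_nth D k = (if k = 0 then 1 else if k = 1 then -2 * ss else if k = 2 then cc else 0)" for k
    unfolding Dpoly by simp
  have dD: "fps_deriv D = fps_const (-2 * ss) + fps_const (2 * cc) * fps_X"
    by (rule fps_ext) (simp add: Dn)
  have Qform: "Q = fps_const (2*b) * (fps_X * AF) - 1 + fps_const (1-2*b) * fps_X"
    unfolding Q_def c1 B_def by (simp add: numeral_fps_const algebra_simps)
  have Qn: "fps_nth Q (Suc (Suc k)) = 2*b * a (Suc k)" for k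
    unfolding Qform by (simp add: AF_def)
  have Qn1: "real n * fps_nth Q (n+1) = real n * (2*b * a n)"
    by (cases n) (simp_all add: Qn)
  have L: "2 * D * fps_deriv Q = fps_const 2 * fps_deriv Q - fps_const (4 * ss) * (fps_X * fps_deriv Q) + fps_const (2 * cc) * (fps_X^2 * fps_deriv Q)"
    unfolding Dpoly by (simp add: numeral_fps_const algebra_simps)
  have R: "Q * fps_deriv D = fps_const (-2 * ss) * Q + fps_const (2 * cc) * (fps_X * Q)"
    unfolding dD by (simp add: algebra_simps)
  have "fps_nth (2 * D * fps_deriv Q) (n+2) = fps_nth (Q * fps_deriv D) (n+2)" using key by simp
  then have "2 * real (n+3) * fps_nth Q (n+3) - 4 * ss * real (n+2) * fps_nth Q (n+2) + 2 * cc * real (n+1) * fps_nth Q (n+1)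
      = -2 * ss * fps_nth Q (n+2) + 2 * cc * fps_nth Q (n+1)"
    unfolding L R fps_add_nth fps_sub_nth fps_mult_left_const_nth fps_X_power_mult_nth fps_X_mult_nth fps_deriv_nth
    by (simp add: algebra_simps numeral_3_eq_3)
  then have "2 * real (n+3) * fps_nth Q (n+3) = 4 * ss * real (n+2) * fps_nth Q (n+2) -2 * ss * fps_nth Q (n+2) - 2 * cc * real n * fps_nth Q (n+1)"
    by (simp add: algebra_simps)
  also have "\<dots> = 4 * ss * real (n+2) * fps_nth Q (n+2) -2 * ss * fps_nth Q (n+2) - 2 * cc * (real n * fps_nth Q (n+1))" by simp
  finally have "2 * real (n+3) * (2*b*a (n+2)) = 4 * ss * real (n+2) * (2*b*a(n+1)) -2 * ss * (2*b*a(n+1)) - 2 * cc * (real n * (2*b*a n))"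
    unfolding Qn1 using Qn[of "n+1"] Qn[of n] by (simp add: numeral_3_eq_3)
  then have "(4*b) * (real (n+3) * a (n+2)) = (4*b) * (ss * real (2*n+3) * a (n+1) - cc * real n * a n)"
    by (simp add: algebra_simps)
  then show ?thesis using b0 by simp
qed

lemma ss_le1: "ss \<le> 1" using b0 b1 by (simp add: ss_def power2_eq_square mult_le_cancel_right1)
lemma cc_nonneg: "cc \<ge> 0" by (simp add: cc_def)
lemma cc_ss: "cc = 2 * ss - 1" by (simp add: cc_def ss_def power2_eq_square algebra_simps)
lemma cc_le1: "cc \<le> 1" using ss_le1 cc_ss by simp

lemma a_mono: "a (Suc n) \<le> a n"
proof (induction n)
  case 0
  have "a 1 = b * (1-b)^2" using a_Suc[of 0] by (simp add: a0 power2_eq_square algebra_simps)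
  also have "\<dots> \<le> b * 1" using b0 b1 by (intro mult_left_mono) (auto simp: power_le_one)
  finally show ?case by (simp add: a0)
next
  case (Suc n)
  have r: "real (n+3) * a (n+2) = ss * real (2*n+3) * a (n+1) - cc * real n * a n" by (rule rec3)
  have "cc * real n * a (n+1) \<le> cc * real n * a n"
    using Suc cc_nonneg by (intro mult_left_mono) auto
  then have "real (n+3) * a (n+2) \<le> ss * real (2*n+3) * a (n+1) - cc * real n * a (n+1)" using r by linarith
  also have "\<dots> = (real n + 3 * ss) * a (n+1)" by (simp add: cc_ss algebra_simps)
  also have "\<dots> \<le> (real n + 3) * a (n+1)" using ss_le1 a_nonneg[of "n+1"] by (intro mult_right_mono) auto
  finally have "real (n+3) * a (n+2) \<le> real (n+3) * a (n+1)" by simp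
  then show ?case by simp
qed

lemma a_antimono: "m \<le> n \<Longrightarrow> a n \<le> a m"
  using decseq_SucI[of a, OF a_mono] by (simp add: decseq_def)

lemma a_le_b: "a n \<le> b" using a_antimono[of 0 n] by (simp add: a0)

fun path :: "nat \<Rightarrow> ptree" where
  "path 0 = Node []" | "path (Suc n) = Node [path n]"

lemma path_edges: "edges (path n) = n" by (induction n) auto
lemma path_weight: "gw_weight p (path n) > 0"
  by (induction n) (use b0 b1 in \<open>auto simp: pU_def\<close>)

lemma a_pos: "a n > 0"
proof -
  have "gw_weight p (path n) \<le> a n"
    unfolding a_def aa_def
    by (rule member_le_sum) (auto simp: TS_def path_edges intro: gw_weight_nonneg p_nonneg finite_TS[unfolded TS_def])
  then show ?thesis using path_weight[of n] by linarith
qed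

definition "Az z = (\<Sum>n. a n * z^n)"

lemma summable_Az: assumes "0 \<le> z" "z < 1" shows "summable (\<lambda>n. a n * z^n)"
proof (rule summable_comparison_test')
  show "summable (\<lambda>n. b * z^n)" using assms by (intro summable_mult summable_geometric) auto
  fix n show "norm (a n * z^n) \<le> b * z^n"
    using assms a_le_b[of n] a_nonneg[of n] by (auto intro: mult_right_mono)
qed

lemma Az_quad: assumes "0 \<le> z" "z < 1"
  shows "Az z = b + (1-2*b)*z*Az z + b*z*(Az z)^2"
proof -
  define f where "f = (\<lambda>n. a n * z^n)"
  have sf: "summable f" using summable_Az[OF assms] by (simp add: f_def)
  have f_nonneg: "f n \<ge> 0" for n using assms a_nonneg by (simp add: f_def)
  have C: "(\<lambda>n. \<Sum>i\<le>n. f i * f (n-i)) sums (Az z * Az z)"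
    using Cauchy_product_sums[of f f] sf f_nonneg by (simp add: Az_def f_def[symmetric])
  have conv: "(\<Sum>i\<le>n. f i * f (n-i)) = z^n * (\<Sum>i\<le>n. a i * a (n-i))" for n
    unfolding sum_distrib_left
  proof (rule sum.cong[OF refl])
    fix i assume "i \<in> {..n}"
    then have zz: "z^i * z^(n-i) = z^n" by (simp add: power_add[symmetric])
    have "f i * f (n-i) = (a i * a (n-i)) * (z^i * z^(n-i))" by (simp add: f_def mult_ac)
    then show "f i * f (n-i) = z^n * (a i * a (n-i))" by (simp add: zz)
  qed
  have "(\<lambda>n. z * ((1-2*b) * f n + b * (\<Sum>i\<le>n. f i * f (n-i)))) sums (z * ((1-2*b) * Az z + b * (Az z * Az z)))"
    using sf C unfolding Az_def f_def[symmetric]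
    by (intro sums_mult sums_add summable_sums) auto
  moreover have "(\<lambda>n. z * ((1-2*b) * f n + b * (\<Sum>i\<le>n. f i * f (n-i)))) = (\<lambda>n. f (Suc n))"
    by (rule ext, simp only: conv) (simp add: f_def a_Suc algebra_simps)
  ultimately have "(\<lambda>n. f (Suc n)) sums (z * ((1-2*b) * Az z + b * (Az z * Az z)))" by simp
  then have "f sums (z * ((1-2*b) * Az z + b * (Az z * Az z)) + f 0)" by (simp add: sums_Suc_iff)
  then have "Az z = z * ((1-2*b) * Az z + b * (Az z * Az z)) + f 0"
    unfolding Az_def f_def by (simp add: sums_iff)
  then show ?thesis by (simp add: f_def a0 algebra_simps power2_eq_square)
qed

lemma Az_bound: assumes "0 \<le> z" "z < 1"
  shows "\<bar>2*b*z*Az z - (1 - (1-2*b)*z)\<bar> \<le> sqrt (1 - z)"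
proof -
  have q: "Az z = b + (1-2*b)*z*Az z + b*z*(Az z)^2" by (rule Az_quad[OF assms])
  have "(2*b*z*Az z - 1 + (1-2*b)*z)^2 = (1 - (1-2*b)*z)^2 - 4*b^2*z"
    by (rule ringlem1) (use q in \<open>simp add: algebra_simps\<close>)
  also have "\<dots> = (1-z)*(1-cc*z)" by (simp add: cc_def power2_eq_square algebra_simps)
  also have "\<dots> \<le> (1-z) * 1" using assms cc_nonneg cc_le1
    by (intro mult_left_mono) (auto simp: mult_nonneg_nonneg)
  finally have "(2*b*z*Az z - (1 - (1-2*b)*z))^2 \<le> 1 - z" by (simp add: algebra_simps)
  then show ?thesis by (metis real_le_rsqrt real_sqrt_abs real_sqrt_le_mono)
qed

lemma Az_tendsto: "(Az \<longlongrightarrow> 1) (at_left 1)"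
proof -
  define e where "e z = 2*b*z*Az z - (1 - (1-2*b)*z)" for z
  have ev: "eventually (\<lambda>z. 0 < z \<and> z < (1::real)) (at_left 1)"
    using eventually_at_left_real[of 0 "1::real"] by simp
  have "((\<lambda>z. sqrt (1 - z)) \<longlongrightarrow> sqrt (1 - 1)) (at_left (1::real))"
    by (intro tendsto_intros)
  then have s0: "((\<lambda>z. sqrt (1 - z)) \<longlongrightarrow> 0) (at_left (1::real))" by simp
  have "(e \<longlongrightarrow> 0) (at_left 1)"
  proof (rule Lim_null_comparison[OF _ s0])
    show "\<forall>\<^sub>F x in at_left 1. norm (e x) \<le> sqrt (1 - x)"
      using ev by eventually_elim (auto simp: e_def intro!: Az_bound)
  qed
  then have "((\<lambda>z. (e z + (1 - (1-2*b)*z)) / (2*b*z)) \<longlongrightarrow> (0 + (1 - (1-2*b)*1)) / (2*b*1)) (at_left 1)"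
    using b0 by (intro tendsto_intros) auto
  then have lim: "((\<lambda>z. (e z + (1 - (1-2*b)*z)) / (2*b*z)) \<longlongrightarrow> 1) (at_left 1)"
    using b0 by simp
  show ?thesis
  proof (rule Lim_transform_eventually[OF lim])
    show "\<forall>\<^sub>F x in at_left 1. (e x + (1 - (1 - 2 * b) * x)) / (2 * b * x) = Az x"
      using ev by eventually_elim (use b0 in \<open>auto simp: e_def\<close>)
  qed
qed

lemma a_partial_le1: "(\<Sum>n<N. a n) \<le> 1"
proof -
  have ev: "eventually (\<lambda>z. 0 < z \<and> z < (1::real)) (at_left 1)"
    using eventually_at_left_real[of 0 "1::real"] by simp
  have "((\<lambda>z. \<Sum>n<N. a n * z^n) \<longlongrightarrow> (\<Sum>n<N. a n * 1^n)) (at_left 1)"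
    by (intro tendsto_intros)
  then have l: "((\<lambda>z. \<Sum>n<N. a n * z^n) \<longlongrightarrow> (\<Sum>n<N. a n)) (at_left 1)" by simp
  show ?thesis
  proof (rule tendsto_le[OF _ Az_tendsto l])
    show "\<forall>\<^sub>F x in at_left 1. (\<Sum>n<N. a n * x ^ n) \<le> Az x"
      using ev by eventually_elim (auto simp: Az_def intro!: sum_le_suminf summable_Az mult_nonneg_nonneg a_nonneg)
  qed simp
qed

lemma summable_a: "summable a"
  by (rule summableI_nonneg_bounded[OF a_nonneg a_partial_le1])

lemma suminf_a: "(\<Sum>n. a n) = 1"
proof (rule antisym)
  show "suminf a \<le> 1" by (rule suminf_le_const[OF summable_a a_partial_le1])
  have ev: "eventually (\<lambda>z. 0 < z \<and> z < (1::real)) (at_left 1)"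
    using eventually_at_left_real[of 0 "1::real"] by simp
  show "1 \<le> suminf a"
  proof (rule tendsto_le[OF _ tendsto_const Az_tendsto])
    show "\<forall>\<^sub>F x in at_left 1. Az x \<le> suminf a"
      using ev
    proof eventually_elim
      case (elim z)
      show ?case unfolding Az_def
      proof (rule suminf_le[OF _ summable_Az summable_a])
        fix n show "a n * z^n \<le> a n"
          using elim mult_left_le[OF power_le_one[of z n] a_nonneg[of n]] by auto
      qed (use elim in auto)
    qed
  qed simp
qed

end


lemma term_le_suminf: fixes f :: "nat \<Rightarrow> real"
  assumes "summable f" "\<And>n. f n \<ge> 0" shows "f k \<le> suminf f"
  using sum_le_suminf[OF assms(1), of "{k}"] assms(2) by auto

lemma swap_le:
  fixes g :: "nat \<Rightarrow> nat \<Rightarrow> real"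
  assumes nn: "\<And>i j. g i j \<ge> 0" and s1: "\<And>i. summable (g i)" and s2: "summable (\<lambda>i. \<Sum>j. g i j)"
  shows "\<And>j. summable (\<lambda>i. g i j)" "summable (\<lambda>j. \<Sum>i. g i j)" "(\<Sum>j. \<Sum>i. g i j) \<le> (\<Sum>i. \<Sum>j. g i j)"
proof -
  show sj: "summable (\<lambda>i. g i j)" for j
    by (rule summable_comparison_test'[OF s2]) (use nn s1 term_le_suminf in auto)
  have part: "(\<Sum>j<J. \<Sum>i. g i j) \<le> (\<Sum>i. \<Sum>j. g i j)" for J
  proof -
    have "(\<Sum>j<J. \<Sum>i. g i j) = (\<Sum>i. \<Sum>j<J. g i j)"
      by (rule suminf_sum[symmetric]) (rule sj)
    also have "\<dots> \<le> (\<Sum>i. \<Sum>j. g i j)"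
    proof (rule suminf_le)
      show "summable (\<lambda>i. \<Sum>j<J. g i j)" by (intro summable_sum sj)
      show "\<And>i. (\<Sum>j<J. g i j) \<le> (\<Sum>j. g i j)" by (rule sum_le_suminf) (use s1 nn in auto)
    qed (rule s2)
    finally show ?thesis .
  qed
  show sm: "summable (\<lambda>j. \<Sum>i. g i j)"
    by (rule summableI_nonneg_bounded[OF _ part]) (use sj nn in \<open>auto intro: suminf_nonneg\<close>)
  show "(\<Sum>j. \<Sum>i. g i j) \<le> (\<Sum>i. \<Sum>j. g i j)"
    by (rule suminf_le_const[OF sm part])
qed

lemma swap_eq:
  fixes g :: "nat \<Rightarrow> nat \<Rightarrow> real"
  assumes nn: "\<And>i j. g i j \<ge> 0" and s1: "\<And>i. summable (g i)" and s2: "summable (\<lambda>i. \<Sum>j. g i j)"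
  shows "summable (\<lambda>j. \<Sum>i. g i j)" "(\<Sum>j. \<Sum>i. g i j) = (\<Sum>i. \<Sum>j. g i j)"
proof -
  note A = swap_le[OF nn s1 s2]
  note B = swap_le[of "\<lambda>j i. g i j", OF nn A(1) A(2)]
  show "summable (\<lambda>j. \<Sum>i. g i j)" by (rule A(2))
  show "(\<Sum>j. \<Sum>i. g i j) = (\<Sum>i. \<Sum>j. g i j)" using A(3) B(3) by simp
qed

lemma diag_sums:
  fixes g :: "nat \<Rightarrow> nat \<Rightarrow> real"
  assumes nn: "\<And>i j. g i j \<ge> 0" and s1: "\<And>i. summable (g i)" and s2: "summable (\<lambda>i. \<Sum>j. g i j)"
  shows "(\<lambda>n. \<Sum>d\<le>n. g d (n-d)) sums (\<Sum>d. \<Sum>e. g d e)"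
proof -
  define G where "G d n = (if d \<le> n then g d (n-d) else 0)" for d n
  have Gs: "G d sums (\<Sum>e. g d e)" for d
  proof -
    have "(\<lambda>i. G d (i + d)) = g d" by (rule ext) (simp add: G_def)
    then have "(\<lambda>i. G d (i + d)) sums (\<Sum>e. g d e)" using s1 summable_sums by metis
    then show ?thesis by (subst (asm) sums_zero_iff_shift) (auto simp: G_def)
  qed
  have G1: "summable (G d)" for d using Gs by (rule sums_summable)
  have G2: "summable (\<lambda>d. \<Sum>n. G d n)" using Gs s2 by (simp add: sums_iff)
  have Gnn: "G d n \<ge> 0" for d n by (simp add: G_def nn)
  note S = swap_eq[of G, OF Gnn G1 G2]
  have fin: "(\<Sum>d. G d n) = (\<Sum>d\<le>n. g d (n-d))" for n
    by (subst suminf_finite[of "{..n}"]) (auto simp: G_def)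
  have "(\<lambda>n. \<Sum>d. G d n) sums (\<Sum>d. \<Sum>n. G d n)" using S by (simp add: sums_iff)
  then show ?thesis using Gs by (simp add: fin sums_iff)
qed

lemma sum_list_map_plus1: "sum_list (map (\<lambda>c. Suc (f c)) cs) = length cs + sum_list (map f cs)"
  by (induction cs) auto

lemma level_le: "level j t \<le> edges t + 1"
proof (induction t arbitrary: j)
  case (Node cs)
  show ?case
  proof (cases j)
    case 0 then show ?thesis by simp
  next
    case (Suc j')
    have "level j (Node cs) = sum_list (map (level j') cs)" using Suc by simp
    also have "\<dots> \<le> sum_list (map (\<lambda>c. Suc (edges c)) cs)"
      by (rule sum_list_mono) (use Node in auto)
    also have "\<dots> = edges (Node cs)" by (simp add: sum_list_map_plus1)
    finally show ?thesis by simp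
  qed
qed

context gwU begin

definition "Ph j n m = Phi p j n m"
definition "Ps j d n m = Psi p j d n m"
definition "mu j m = (\<Sum>n. Ph j n m)"
definition "nu j d m = (\<Sum>n. Ps j d n m)"

lemma Ph_nonneg: "Ph j n m \<ge> 0"
  by (auto simp: Ph_def Phi_def intro!: sum_nonneg gw_weight_nonneg p_nonneg)
lemma Ps_nonneg: "Ps j d n m \<ge> 0"
  by (auto simp: Ps_def Psi_def intro!: sum_nonneg WL_nonneg p_nonneg)

lemma Ph_le_a: "Ph j n m \<le> a n"
  unfolding Ph_def Phi_def a_def aa_def
  by (rule sum_mono2) (auto intro: finite_TS gw_weight_nonneg p_nonneg)

lemma summable_Ph: "summable (\<lambda>n. Ph j n m)"
  by (rule summable_comparison_test'[OF summable_a]) (use Ph_nonneg Ph_le_a in auto)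

lemma mu_nonneg: "mu j m \<ge> 0"
  unfolding mu_def by (intro suminf_nonneg summable_Ph Ph_nonneg)

lemma Ph_zero: "m > n + 1 \<Longrightarrow> Ph j n m = 0"
proof -
  assume m: "m > n + 1"
  have "{t \<in> TS n. level j t = m} = {}"
  proof -
    { fix t assume "t \<in> TS n" "level j t = m"
      then have False using level_le[of j t] m by (simp add: TS_def) }
    then show ?thesis by blast
  qed
  then show ?thesis unfolding Ph_def Phi_def by (simp only: sum.empty)
qed

lemma sum_Ph: "(\<Sum>m\<le>n+1. Ph j n m) = a n"
proof -
  have "a n = (\<Sum>t\<in>TS n. \<Sum>m\<le>n+1. if level j t = m then gw_weight p t else 0)"
    unfolding a_def aa_def
  proof (rule sum.cong[OF refl])
    fix t assume "t \<in> TS n"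
    then have "level j t \<in> {..n+1}" using level_le[of j t] by (auto simp: TS_def)
    then show "gw_weight p t = (\<Sum>m\<le>n+1. if level j t = m then gw_weight p t else 0)"
      by (simp add: sum.delta)
  qed
  also have "\<dots> = (\<Sum>m\<le>n+1. \<Sum>t\<in>TS n. if level j t = m then gw_weight p t else 0)"
    by (rule sum.swap)
  also have "\<dots> = (\<Sum>m\<le>n+1. Ph j n m)"
    unfolding Ph_def Phi_def by (simp add: sum.inter_filter[symmetric] finite_TS)
  finally show ?thesis by (rule sym)
qed

lemma suminf_Ph_m: "(\<Sum>m. Ph j n m) = a n" "summable (\<lambda>m. Ph j n m)"
proof -
  have "(\<Sum>m. Ph j n m) = (\<Sum>m\<le>n+1. Ph j n m)"
    by (rule suminf_finite) (auto simp: Ph_zero)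
  then show "(\<Sum>m. Ph j n m) = a n" by (simp only: sum_Ph)
  show "summable (\<lambda>m. Ph j n m)"
    by (rule summable_finite[of "{..n+1}"]) (auto simp: Ph_zero)
qed

lemma mu_total: "summable (mu j)" "(\<Sum>m. mu j m) = 1"
proof -
  note S = swap_eq[of "\<lambda>n m. Ph j n m", OF Ph_nonneg suminf_Ph_m(2)]
  have s2: "summable (\<lambda>n. \<Sum>m. Ph j n m)" by (simp add: suminf_Ph_m summable_a)
  show "summable (mu j)" using S(1)[OF s2] by (simp add: mu_def[abs_def])
  show "(\<Sum>m. mu j m) = 1" using S(2)[OF s2] by (simp add: mu_def[abs_def] suminf_Ph_m suminf_a)
qed

lemma mu_le1: "mu j m \<le> 1"
  using term_le_suminf[of "mu j" m, OF mu_total(1) mu_nonneg] mu_total(2)[of j] by simp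

lemma mu_0: "mu 0 m = (if m = 1 then 1 else 0)"
  by (simp add: mu_def Ph_def Phi_0 a_def[symmetric] suminf_a)

lemma nu_nonneg: "nu j d m \<ge> 0" if "summable (\<lambda>n. Ps j d n m)"
  unfolding nu_def by (intro suminf_nonneg that Ps_nonneg)

lemma Ps_rec: "Ps j (Suc d) n m = (\<Sum>m1\<le>m. \<Sum>i\<le>n. Ph j i m1 * Ps j d (n-i) (m-m1))"
  unfolding Ps_def Ph_def Psi_Suc by (rule sum.swap)

lemma nu_rec: "summable (\<lambda>n. Ps j d n m) \<and> nu j (Suc d) m = (\<Sum>m1\<le>m. mu j m1 * nu j d (m-m1))"
proof (induction d arbitrary: m)
  case 0
  have s: "summable (\<lambda>n. Ps j 0 n m)" for m
    by (rule summable_finite[of "{0}"]) (auto simp: Ps_def Psi_0)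
  have n0: "nu j 0 m = (if m = 0 then 1 else 0)" for m
    by (subst nu_def, subst suminf_finite[of "{0}"]) (auto simp: Ps_def Psi_0)
  have "(\<lambda>n. Ps j 1 n m) sums (\<Sum>m1\<le>m. mu j m1 * nu j 0 (m-m1))"
    unfolding One_nat_def Ps_rec
  proof (rule sums_sum)
    fix m1 assume "m1 \<in> {..m}"
    show "(\<lambda>n. \<Sum>i\<le>n. Ph j i m1 * Ps j 0 (n - i) (m - m1)) sums (mu j m1 * nu j 0 (m - m1))"
      unfolding mu_def nu_def
      by (rule Cauchy_product_sums) (use summable_Ph s Ph_nonneg Ps_nonneg in auto)
  qed
  then show ?case using s by (simp add: nu_def sums_iff)
next
  case (Suc d)
  have s: "summable (\<lambda>n. Ps j (Suc d) n m)" for m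
  proof -
    have "(\<lambda>n. Ps j (Suc d) n m) sums (\<Sum>m1\<le>m. mu j m1 * nu j d (m-m1))"
      unfolding Ps_rec
    proof (rule sums_sum)
      fix m1 assume "m1 \<in> {..m}"
      show "(\<lambda>n. \<Sum>i\<le>n. Ph j i m1 * Ps j d (n - i) (m - m1)) sums (mu j m1 * nu j d (m - m1))"
        unfolding mu_def nu_def
        by (rule Cauchy_product_sums) (use summable_Ph Suc.IH Ph_nonneg Ps_nonneg in auto)
    qed
    then show ?thesis by (rule sums_summable)
  qed
  have "(\<lambda>n. Ps j (Suc (Suc d)) n m) sums (\<Sum>m1\<le>m. mu j m1 * nu j (Suc d) (m-m1))"
    unfolding Ps_rec[of j "Suc d"]
  proof (rule sums_sum)
    fix m1 assume "m1 \<in> {..m}"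
    show "(\<lambda>n. \<Sum>i\<le>n. Ph j i m1 * Ps j (Suc d) (n - i) (m - m1)) sums (mu j m1 * nu j (Suc d) (m - m1))"
      unfolding mu_def nu_def
      by (rule Cauchy_product_sums) (use summable_Ph s Ph_nonneg Ps_nonneg in auto)
  qed
  then show ?case using s by (simp add: nu_def sums_iff)
qed

lemma summable_Ps: "summable (\<lambda>n. Ps j d n m)" using nu_rec by blast
lemma nu_Suc: "nu j (Suc d) m = (\<Sum>m1\<le>m. mu j m1 * nu j d (m-m1))" using nu_rec by blast
lemma nu_nonneg': "nu j d m \<ge> 0" by (rule nu_nonneg[OF summable_Ps])
lemma nu_0: "nu j 0 m = (if m = 0 then 1 else 0)"
  by (subst nu_def, subst suminf_finite[of "{0}"]) (auto simp: Ps_def Psi_0)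

lemma nu_total: "summable (nu j d) \<and> (\<Sum>m. nu j d m) = 1"
proof (induction d)
  case 0
  have "nu j 0 sums 1" using sums_finite[of "{0}" "nu j 0"] by (simp add: nu_0)
  then show ?case by (simp add: sums_iff)
next
  case (Suc d)
  have "(\<lambda>m. \<Sum>m1\<le>m. mu j m1 * nu j d (m-m1)) sums ((\<Sum>m. mu j m) * (\<Sum>m. nu j d m))"
    by (rule Cauchy_product_sums) (use mu_total Suc mu_nonneg nu_nonneg' in auto)
  then have "nu j (Suc d) sums 1" using Suc mu_total by (simp add: nu_Suc[abs_def])
  then show ?case by (simp add: sums_iff)
qed

lemma nu_le1: "nu j d m \<le> 1"
  using term_le_suminf[of "nu j d" m] nu_total[of j d] nu_nonneg' by auto

lemma p_sums_gen: assumes q: "0 \<le> q" "q \<le> 1"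
  shows "(\<lambda>d. p d * q^d) sums (b + (1-b)^2 * q / (1 - b*q))"
proof -
  have bq: "norm (b*q) < 1" using q b0 b1
    by (auto simp: abs_mult intro: le_less_trans[OF mult_left_le[of q b]])
  have "(\<lambda>d. (1-b)^2 * q * (b*q)^d) sums ((1-b)^2 * q * (1 / (1 - b*q)))"
    by (intro sums_mult geometric_sums bq)
  moreover have "(\<lambda>d. (1-b)^2 * q * (b*q)^d) = (\<lambda>d. p (Suc d) * q^(Suc d))"
    by (rule ext) (simp add: p_Suc power_mult_distrib algebra_simps)
  ultimately have "(\<lambda>d. p (Suc d) * q^(Suc d)) sums ((1-b)^2 * q / (1 - b*q))" by simp
  then have "(\<lambda>d. p d * q^d) sums ((1-b)^2 * q / (1 - b*q) + p 0 * q^0)"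
    by (subst (asm) sums_Suc_iff) simp
  then show ?thesis by (simp add: p_0 algebra_simps)
qed

lemma p_sums: "p sums 1"
proof -
  have "(\<lambda>d. p d * 1^d) sums (b + (1-b)^2 * 1 / (1 - b*1))" by (rule p_sums_gen) auto
  moreover have "b + (1-b)^2 * 1 / (1 - b*1) = 1" using b1 by (simp add: power2_eq_square field_simps)
  ultimately show ?thesis by simp
qed

lemma summable_p: "summable p" using p_sums by (rule sums_summable)

lemma p_mean: "(\<lambda>d. real d * p d) sums 1"
proof -
  have "(\<lambda>d. (1-b)^2 * (of_nat (Suc d) * b^d)) sums ((1-b)^2 * (1 / (1 - b)^2))"
    by (intro sums_mult geometric_deriv_sums) (use b0 b1 in auto)
  moreover have "(\<lambda>d. (1-b)^2 * (of_nat (Suc d) * b^d)) = (\<lambda>d. real (Suc d) * p (Suc d))"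
    by (rule ext) (simp add: p_Suc algebra_simps)
  ultimately have "(\<lambda>d. real (Suc d) * p (Suc d)) sums 1" using b1 by simp
  then show ?thesis by (subst (asm) sums_Suc_iff) simp
qed

lemma mu_rec: "(\<lambda>d. p d * nu j d m) sums mu (Suc j) m"
proof -
  define g where "g d e = p d * Ps j d e m" for d e
  have nn: "g d e \<ge> 0" for d e by (simp add: g_def p_nonneg Ps_nonneg)
  have s1: "summable (g d)" for d unfolding g_def by (intro summable_mult summable_Ps)
  have gsum: "(\<Sum>e. g d e) = p d * nu j d m" for d
    unfolding g_def nu_def by (rule suminf_mult[OF summable_Ps])
  have s2: "summable (\<lambda>d. \<Sum>e. g d e)"
    unfolding gsum
    by (rule summable_comparison_test'[OF summable_p]) (use p_nonneg nu_nonneg' nu_le1 in \<open>auto intro: mult_left_le\<close>)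
  have "(\<lambda>n. \<Sum>d\<le>n. g d (n-d)) sums (\<Sum>d. \<Sum>e. g d e)" by (rule diag_sums[OF nn s1 s2])
  moreover have "(\<lambda>n. \<Sum>d\<le>n. g d (n-d)) = (\<lambda>n. Ph (Suc j) n m)"
    by (rule ext) (simp add: g_def Ph_def Ps_def Phi_Suc)
  ultimately have "(\<lambda>n. Ph (Suc j) n m) sums (\<Sum>d. p d * nu j d m)" by (simp add: gsum)
  then have "mu (Suc j) m = (\<Sum>d. p d * nu j d m)" by (simp add: mu_def sums_iff)
  moreover have "summable (\<lambda>d. p d * nu j d m)" using s2 by (simp add: gsum)
  ultimately show ?thesis by (simp add: summable_sums)
qed

lemma summable_norm_nn: fixes f :: "nat \<Rightarrow> real"
  shows "(\<And>n. f n \<ge> 0) \<Longrightarrow> summable f \<Longrightarrow> summable (\<lambda>n. norm (f n))"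
  by simp

lemma mu_mean: "(\<lambda>m. real m * mu j m) sums 1"
proof (induction j)
  case 0
  have "(\<lambda>m. real m * mu 0 m) sums (\<Sum>m\<in>{1}. real m * mu 0 m)"
    by (rule sums_finite) (auto simp: mu_0)
  then show ?case by (simp add: mu_0)
next
  case (Suc j)
  note IHj = Suc.IH
  have sm1: "summable (\<lambda>m. norm (real m * mu j m))"
    using IHj mu_nonneg by (intro summable_norm_nn sums_summable) auto
  have numean: "(\<lambda>m. real m * nu j d m) sums real d" for d
  proof (induction d)
    case 0
    have "(\<lambda>m. real m * nu j 0 m) sums (\<Sum>m\<in>{}. real m * nu j 0 m)"
      by (rule sums_finite) (auto simp: nu_0)
    then show ?case by simp
  next
    case (Suc d)
    have sm2: "summable (\<lambda>m. norm (nu j d m))"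
      using nu_total nu_nonneg' by (intro summable_norm_nn) auto
    have sm3: "summable (\<lambda>m. norm (real m * nu j d m))"
      using Suc.IH nu_nonneg' by (intro summable_norm_nn sums_summable) auto
    have sm4: "summable (\<lambda>m. norm (mu j m))"
      using mu_total mu_nonneg by (intro summable_norm_nn) auto
    have C1: "(\<lambda>m. \<Sum>m1\<le>m. (real m1 * mu j m1) * nu j d (m-m1)) sums ((\<Sum>m. real m * mu j m) * (\<Sum>m. nu j d m))"
      by (rule Cauchy_product_sums[OF sm1 sm2])
    have C2: "(\<lambda>m. \<Sum>m1\<le>m. mu j m1 * (real (m-m1) * nu j d (m-m1))) sums ((\<Sum>m. mu j m) * (\<Sum>m. real m * nu j d m))"
      by (rule Cauchy_product_sums[OF sm4 sm3])
    have "(\<lambda>m. (\<Sum>m1\<le>m. (real m1 * mu j m1) * nu j d (m-m1)) + (\<Sum>m1\<le>m. mu j m1 * (real (m-m1) * nu j d (m-m1))))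
        sums ((\<Sum>m. real m * mu j m) * (\<Sum>m. nu j d m) + (\<Sum>m. mu j m) * (\<Sum>m. real m * nu j d m))"
      by (rule sums_add[OF C1 C2])
    moreover have "(\<lambda>m. (\<Sum>m1\<le>m. (real m1 * mu j m1) * nu j d (m-m1)) + (\<Sum>m1\<le>m. mu j m1 * (real (m-m1) * nu j d (m-m1))))
        = (\<lambda>m. real m * nu j (Suc d) m)"
    proof (rule ext)
      fix m
      have "(\<Sum>m1\<le>m. (real m1 * mu j m1) * nu j d (m-m1)) + (\<Sum>m1\<le>m. mu j m1 * (real (m-m1) * nu j d (m-m1)))
          = (\<Sum>m1\<le>m. real m * (mu j m1 * nu j d (m-m1)))"
        unfolding sum.distrib[symmetric]
        by (rule sum.cong) (auto simp: of_nat_diff algebra_simps)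
      then show "(\<Sum>m1\<le>m. (real m1 * mu j m1) * nu j d (m-m1)) + (\<Sum>m1\<le>m. mu j m1 * (real (m-m1) * nu j d (m-m1)))
          = real m * nu j (Suc d) m"
        by (simp add: nu_Suc sum_distrib_left)
    qed
    moreover have "(\<Sum>m. real m * mu j m) * (\<Sum>m. nu j d m) + (\<Sum>m. mu j m) * (\<Sum>m. real m * nu j d m) = real (Suc d)"
      using IHj Suc.IH nu_total[of j d] mu_total[of j] by (simp add: sums_iff)
    ultimately show ?case by simp
  qed
  define g where "g d m = p d * (real m * nu j d m)" for d m
  have nn: "g d m \<ge> 0" for d m by (simp add: g_def p_nonneg nu_nonneg')
  have s1: "summable (g d)" for d unfolding g_def using numean[of d] by (intro summable_mult sums_summable) auto
  have gs: "(\<Sum>m. g d m) = p d * real d" for d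
    unfolding g_def using numean[of d] by (simp add: suminf_mult sums_summable sums_unique[symmetric])
  have s2: "summable (\<lambda>d. \<Sum>m. g d m)" unfolding gs using p_mean by (simp add: sums_summable mult.commute)
  note S = swap_eq[OF nn s1 s2]
  have gd: "(\<Sum>d. g d m) = real m * mu (Suc j) m" for m
  proof -
    have "(\<Sum>d. g d m) = (\<Sum>d. real m * (p d * nu j d m))" unfolding g_def by (simp add: algebra_simps)
    also have "\<dots> = real m * (\<Sum>d. p d * nu j d m)" using mu_rec[of j m] by (simp add: suminf_mult sums_summable)
    also have "\<dots> = real m * mu (Suc j) m" using mu_rec[of j m] by (simp add: sums_iff)
    finally show ?thesis .
  qed
  have "(\<Sum>d. \<Sum>m. g d m) = 1" unfolding gs using p_mean by (simp add: sums_iff mult.commute)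
  then show ?case using S by (simp add: gd sums_iff)
qed

lemma nu_zero: "nu j d 0 = (mu j 0)^d"
  by (induction d) (simp_all add: nu_0 nu_Suc)

lemma aux_frac: fixes x D J :: real assumes "D \<noteq> 0" "x \<noteq> 0" "1 + J \<noteq> 0"
  shows "x^2 * (J/D) / (x*(1+J)/D) = x * J / (1+J)"
proof -
  have "x^2 * (J/D) / (x*(1+J)/D) = (x^2 * J) / (x*(1+J))"
    using assms by (simp add: divide_simps)
  also have "\<dots> = (x * J) * x / ((1+J) * x)" by (simp add: power2_eq_square algebra_simps)
  also have "\<dots> = x * J / (1+J)" using assms by simp
  finally show ?thesis .
qed

lemma mu_zero: "mu j 0 = real j * b / (1 - b + real j * b)"
proof (induction j)
  case 0 then show ?case by (simp add: mu_def Ph_def Phi_0)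
next
  case (Suc j)
  define q where "q = mu j 0"
  have q01: "0 \<le> q" "q \<le> 1" using mu_nonneg mu_le1 by (auto simp: q_def)
  have "mu (Suc j) 0 = b + (1-b)^2 * q / (1 - b*q)"
    using mu_rec[of j 0] p_sums_gen[OF q01] by (simp add: nu_zero q_def[symmetric] sums_iff)
  also have "\<dots> = real (Suc j) * b / (1 - b + real (Suc j) * b)"
  proof -
    have d1: "1 - b + real j * b > 0" using b0 b1 by (simp add: add_pos_nonneg)
    have d2: "1 + real j * b > 0" using b0 by (simp add: add_pos_nonneg)
    have qv: "q = real j * b / (1 - b + real j * b)" using Suc by (simp add: q_def)
    have "1 - b*q = (1-b)*(1 + real j * b) / (1 - b + real j * b)"
      unfolding qv using d1 by (simp add: field_simps)
    then have "(1-b)^2 * q / (1 - b*q) = (1-b)^2 * (real j * b / (1 - b + real j * b)) / ((1-b)*(1 + real j * b) / (1 - b + real j * b))"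
      unfolding qv by simp
    also have "\<dots> = (1-b) * (real j * b) / (1 + real j * b)"
      by (rule aux_frac) (use d1 d2 b1 in auto)
    finally have "(1-b)^2 * q / (1 - b*q) = (1-b) * real j * b / (1 + real j * b)" by simp
    then have "b + (1-b)^2 * q / (1 - b*q) = b * (1 + real j) / (1 + real j * b)"
      using d2 by (simp add: field_simps)
    also have "\<dots> = real (Suc j) * b / (1 - b + real (Suc j) * b)"
      by (simp add: algebra_simps)
    finally show ?thesis .
  qed
  finally show ?case .
qed

lemma rho: "(\<Sum>m. mu j (Suc m)) = 1 / (1 + real j * b / (1 - b))"
proof -
  have "(\<Sum>m. mu j (Suc m)) = (\<Sum>m. mu j m) - mu j 0"
    using suminf_split_head[OF mu_total(1)] by simp
  also have "\<dots> = 1 - real j * b / (1 - b + real j * b)" by (simp add: mu_total mu_zero)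
  also have "\<dots> = 1 / (1 + real j * b / (1 - b))"
  proof -
    have d1: "1 - b + real j * b > 0" using b0 b1 by (simp add: add_pos_nonneg)
    have "1 - real j * b / (1 - b + real j * b) = (1 - b) / (1 - b + real j * b)"
      using d1 by (simp add: field_simps)
    also have "\<dots> = 1 / (1 + real j * b / (1 - b))"
      using d1 b1 by (simp add: field_simps)
    finally show ?thesis .
  qed
  finally show ?thesis .
qed

end


context gwU begin

definition "LB X x \<longleftrightarrow> (\<forall>c<x. eventually (\<lambda>n. c * a n \<le> X n) sequentially)"

lemma LB_add: assumes "LB X x" "LB Y y" shows "LB (\<lambda>n. X n + Y n) (x + y)"
  unfolding LB_def
proof (intro allI impI)
  fix c assume c: "c < x + y"
  define e where "e = (x + y - c) / 2"
  have e: "e > 0" using c by (simp add: e_def)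
  have "eventually (\<lambda>n. (x - e) * a n \<le> X n) sequentially" using assms(1) e by (simp add: LB_def)
  moreover have "eventually (\<lambda>n. (y - e) * a n \<le> Y n) sequentially" using assms(2) e by (simp add: LB_def)
  ultimately show "eventually (\<lambda>n. c * a n \<le> X n + Y n) sequentially"
  proof eventually_elim
    case (elim n)
    have ceq: "c = (x - e) + (y - e)" by (simp add: e_def)
    have "c * a n = (x - e) * a n + (y - e) * a n" unfolding ceq by (rule distrib_right)
    then show ?case using elim by linarith
  qed
qed

lemma LB_zero: assumes "\<And>n. X n \<ge> 0" shows "LB X 0"
  unfolding LB_def
proof (intro allI impI)
  fix c :: real assume "c < 0"
  then have "c * a n \<le> X n" for n using a_nonneg[of n] assms[of n] by (metis mult_nonpos_nonneg order.trans less_imp_le)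
  then show "eventually (\<lambda>n. c * a n \<le> X n) sequentially" by simp
qed

lemma LB_sum: assumes "finite I" "\<And>i. i \<in> I \<Longrightarrow> LB (X i) (x i)"
  shows "LB (\<lambda>n. \<Sum>i\<in>I. X i n) (\<Sum>i\<in>I. x i)"
  using assms
proof (induction I rule: finite_induct)
  case empty then show ?case by (simp add: LB_zero)
next
  case (insert i I)
  then show ?case by (simp add: LB_add)
qed

lemma LB_scale: assumes "k \<ge> 0" "LB X x" "\<And>n. X n \<ge> 0" shows "LB (\<lambda>n. k * X n) (k * x)"
proof (cases "k = 0")
  case True then show ?thesis using LB_zero[of "\<lambda>n. 0"] by simp
next
  case False
  then have k: "k > 0" using assms(1) by simp
  show ?thesis unfolding LB_def
  proof (intro allI impI)
    fix c assume "c < k * x"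
    then have "c / k < x" using k by (simp add: field_simps)
    then have "eventually (\<lambda>n. (c/k) * a n \<le> X n) sequentially" using assms(2) unfolding LB_def by blast
    then show "eventually (\<lambda>n. c * a n \<le> k * X n) sequentially"
    proof eventually_elim
      case (elim n)
      then have "k * ((c/k) * a n) \<le> k * X n" using k by (intro mult_left_mono) auto
      then show ?case using k by simp
    qed
  qed
qed

lemma LB_mono: assumes "LB X x" "eventually (\<lambda>n. X n \<le> Y n) sequentially" shows "LB Y x"
  unfolding LB_def
proof (intro allI impI)
  fix c assume "c < x"
  then have "eventually (\<lambda>n. c * a n \<le> X n) sequentially" using assms(1) by (simp add: LB_def)
  with assms(2) show "eventually (\<lambda>n. c * a n \<le> Y n) sequentially"
    by eventually_elim simp
qed

lemma LB_lim: assumes "\<And>K. LB X (s K)" "s \<longlonglongrightarrow> x" shows "LB X x"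
  unfolding LB_def
proof (intro allI impI)
  fix c assume "c < x"
  then have "eventually (\<lambda>K. c < s K) sequentially" using assms(2) by (simp add: order_tendsto_iff)
  then obtain K where "c < s K" by (auto simp: eventually_sequentially)
  then show "eventually (\<lambda>n. c * a n \<le> X n) sequentially" using assms(1)[of K] by (simp add: LB_def)
qed

lemma LB_shift: assumes "LB X x" "\<And>n. X n \<ge> 0" shows "LB (\<lambda>n. X (n - i)) x"
  unfolding LB_def
proof (intro allI impI)
  fix c assume "c < x"
  then obtain N where N: "\<And>n. n \<ge> N \<Longrightarrow> c * a n \<le> X n"
    using assms(1) by (auto simp: LB_def eventually_sequentially)
  have "c * a n \<le> X (n - i)" if "n \<ge> N + i" for n
  proof (cases "c \<ge> 0")
    case True
    have "c * a n \<le> c * a (n - i)" using True a_antimono[of "n-i" n] by (intro mult_left_mono) auto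
    also have "\<dots> \<le> X (n - i)" using N that by auto
    finally show ?thesis .
  next
    case False
    then have "c * a n \<le> 0" using a_nonneg[of n] by (simp add: mult_nonpos_nonneg)
    then show ?thesis using assms(2)[of "n-i"] by linarith
  qed
  then show "eventually (\<lambda>n. c * a n \<le> X (n - i)) sequentially"
    by (auto simp: eventually_sequentially)
qed

lemma sum_two_ends:
  fixes f :: "nat \<Rightarrow> real"
  assumes nn: "\<And>i. f i \<ge> 0" and n: "2 * K < n"
  shows "(\<Sum>i\<le>K. f i) + (\<Sum>i\<le>K. f (n - i)) \<le> (\<Sum>i\<le>n. f i)"
proof -
  have inj: "inj_on (\<lambda>i. n - i) {..K}" using n by (auto simp: inj_on_def)
  have disj: "{..K} \<inter> (\<lambda>i. n - i) ` {..K} = {}" using n by auto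
  have "(\<Sum>i\<le>K. f (n - i)) = (\<Sum>i\<in>(\<lambda>i. n - i) ` {..K}. f i)"
    using sum.reindex[OF inj, of f] by simp
  then have "(\<Sum>i\<le>K. f i) + (\<Sum>i\<le>K. f (n - i)) = (\<Sum>i\<in>{..K} \<union> (\<lambda>i. n - i) ` {..K}. f i)"
    using sum.union_disjoint[OF _ _ disj, of f] by simp
  also have "\<dots> \<le> (\<Sum>i\<le>n. f i)"
    by (rule sum_mono2) (use n nn in auto)
  finally show ?thesis .
qed

lemma LB_Ps_step:
  assumes IH: "\<And>m. LB (\<lambda>n. Ph j n m) (real m * mu j m)"
  shows "LB (\<lambda>n. Ps j d n m) (real m * nu j d m)"
proof (induction d arbitrary: m)
  case 0
  have h0: "real m * nu j 0 m = 0" by (simp add: nu_0)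
  show ?case unfolding h0 by (rule LB_zero[OF Ps_nonneg])
next
  case (Suc d)
  define A where "A m1 = real (m-m1) * nu j d (m-m1)" for m1
  define B where "B m1 = real m1 * mu j m1" for m1
  define s where "s K = (\<Sum>m1\<le>m. (\<Sum>i\<le>K. Ph j i m1 * A m1) + (\<Sum>i\<le>K. Ps j d i (m-m1) * B m1))" for K
  have LBK: "LB (\<lambda>n. Ps j (Suc d) n m) (s K)" for K
  proof -
    have L1: "LB (\<lambda>n. \<Sum>m1\<le>m. (\<Sum>i\<le>K. Ph j i m1 * Ps j d (n-i) (m-m1)) + (\<Sum>i\<le>K. Ps j d i (m-m1) * Ph j (n-i) m1)) (s K)"
      unfolding s_def
    proof (rule LB_sum, simp, rule LB_add)
      fix m1
      show "LB (\<lambda>n. \<Sum>i\<le>K. Ph j i m1 * Ps j d (n - i) (m - m1)) (\<Sum>i\<le>K. Ph j i m1 * A m1)"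
        unfolding A_def
        by (rule LB_sum, simp, rule LB_scale[OF Ph_nonneg LB_shift[OF Suc.IH Ps_nonneg]]) (simp add: Ps_nonneg mult_nonneg_nonneg Ph_nonneg)
      show "LB (\<lambda>n. \<Sum>i\<le>K. Ps j d i (m - m1) * Ph j (n - i) m1) (\<Sum>i\<le>K. Ps j d i (m - m1) * B m1)"
        unfolding B_def
        by (rule LB_sum, simp, rule LB_scale[OF Ps_nonneg LB_shift[OF IH Ph_nonneg]]) (simp add: Ph_nonneg)
    qed
    show ?thesis
    proof (rule LB_mono[OF L1])
      show "eventually (\<lambda>n. (\<Sum>m1\<le>m. (\<Sum>i\<le>K. Ph j i m1 * Ps j d (n-i) (m-m1)) + (\<Sum>i\<le>K. Ps j d i (m-m1) * Ph j (n-i) m1)) \<le> Ps j (Suc d) n m) sequentially"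
        unfolding eventually_sequentially
      proof (intro exI allI impI)
        fix n assume n: "Suc (2*K) \<le> n"
        show "(\<Sum>m1\<le>m. (\<Sum>i\<le>K. Ph j i m1 * Ps j d (n-i) (m-m1)) + (\<Sum>i\<le>K. Ps j d i (m-m1) * Ph j (n-i) m1)) \<le> Ps j (Suc d) n m"
          unfolding Ps_rec
        proof (rule sum_mono)
          fix m1 assume "m1 \<in> {..m}"
          have "(\<Sum>i\<le>K. Ps j d i (m-m1) * Ph j (n-i) m1) = (\<Sum>i\<le>K. Ph j (n-i) m1 * Ps j d (n - (n-i)) (m-m1))"
            by (rule sum.cong) (use n in auto)
          then show "(\<Sum>i\<le>K. Ph j i m1 * Ps j d (n-i) (m-m1)) + (\<Sum>i\<le>K. Ps j d i (m-m1) * Ph j (n-i) m1) \<le> (\<Sum>i\<le>n. Ph j i m1 * Ps j d (n - i) (m - m1))"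
            using sum_two_ends[of "\<lambda>i. Ph j i m1 * Ps j d (n - i) (m - m1)" K n] n
            by (simp add: Ph_nonneg Ps_nonneg)
        qed
      qed
    qed
  qed
  have lim: "s \<longlonglongrightarrow> (\<Sum>m1\<le>m. mu j m1 * A m1 + nu j d (m-m1) * B m1)"
  proof -
    have "s = (\<lambda>K. \<Sum>m1\<le>m. (\<Sum>i\<le>K. Ph j i m1) * A m1 + (\<Sum>i\<le>K. Ps j d i (m-m1)) * B m1)"
      by (rule ext) (simp add: s_def sum_distrib_right)
    moreover have "(\<lambda>K. \<Sum>m1\<le>m. (\<Sum>i\<le>K. Ph j i m1) * A m1 + (\<Sum>i\<le>K. Ps j d i (m-m1)) * B m1)
        \<longlonglongrightarrow> (\<Sum>m1\<le>m. mu j m1 * A m1 + nu j d (m-m1) * B m1)"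
      unfolding mu_def nu_def
      by (intro tendsto_sum tendsto_add tendsto_mult tendsto_const summable_LIMSEQ' summable_Ph summable_Ps)
    ultimately show ?thesis by simp
  qed
  have val: "(\<Sum>m1\<le>m. mu j m1 * A m1 + nu j d (m-m1) * B m1) = real m * nu j (Suc d) m"
    unfolding nu_Suc sum_distrib_left A_def B_def
    by (rule sum.cong) (auto simp: of_nat_diff algebra_simps)
  show ?case using LB_lim[OF LBK lim] val by simp
qed

lemma LB_Ph: "LB (\<lambda>n. Ph j n m) (real m * mu j m)"
proof (induction j arbitrary: m)
  case 0
  show ?case
  proof (cases "m = 1")
    case True
    show ?thesis unfolding LB_def
    proof (intro allI impI)
      fix c :: real assume c: "c < real m * mu 0 m"
      then have "c < 1" using True by (simp add: mu_0)
      then have "c * a n \<le> Ph 0 n m" for n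
        using True a_nonneg[of n] mult_right_mono[of c 1 "a n"] by (simp add: Ph_def Phi_0 a_def[symmetric])
      then show "eventually (\<lambda>n. c * a n \<le> Ph 0 n m) sequentially" by simp
    qed
  next
    case False
    then show ?thesis using LB_zero[of "\<lambda>n. Ph 0 n m", OF Ph_nonneg] by (simp add: mu_0)
  qed
next
  case (Suc j)
  define s where "s D = (\<Sum>d\<le>D. p d * (real m * nu j d m))" for D
  have LBD: "LB (\<lambda>n. Ph (Suc j) n m) (s D)" for D
  proof -
    have L1: "LB (\<lambda>n. \<Sum>d\<le>D. p d * Ps j d (n-d) m) (s D)"
      unfolding s_def
      by (rule LB_sum, simp, rule LB_scale[OF p_nonneg LB_shift[OF LB_Ps_step[OF Suc.IH] Ps_nonneg]]) (simp add: Ps_nonneg)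
    show ?thesis
    proof (rule LB_mono[OF L1])
      show "eventually (\<lambda>n. (\<Sum>d\<le>D. p d * Ps j d (n-d) m) \<le> Ph (Suc j) n m) sequentially"
        unfolding eventually_sequentially
      proof (intro exI allI impI)
        fix n assume n: "D \<le> n"
        show "(\<Sum>d\<le>D. p d * Ps j d (n-d) m) \<le> Ph (Suc j) n m"
          unfolding Ph_def Phi_Suc Ps_def[symmetric]
          by (rule sum_mono2) (use n in \<open>auto intro: mult_nonneg_nonneg p_nonneg Ps_nonneg\<close>)
      qed
    qed
  qed
  have "s = (\<lambda>D. real m * (\<Sum>d\<le>D. p d * nu j d m))"
    by (rule ext) (simp add: s_def sum_distrib_left algebra_simps)
  moreover have "(\<lambda>D. real m * (\<Sum>d\<le>D. p d * nu j d m)) \<longlonglongrightarrow> real m * mu (Suc j) m"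
  proof (intro tendsto_mult tendsto_const)
    have "(\<lambda>D. \<Sum>d\<le>D. p d * nu j d m) \<longlonglongrightarrow> (\<Sum>d. p d * nu j d m)"
      by (rule summable_LIMSEQ'[OF sums_summable[OF mu_rec]])
    then show "(\<lambda>D. \<Sum>d\<le>D. p d * nu j d m) \<longlonglongrightarrow> mu (Suc j) m"
      using sums_unique[OF mu_rec[of j m]] by simp
  qed
  ultimately have "s \<longlonglongrightarrow> real m * mu (Suc j) m" by simp
  then show ?case using LB_lim[OF LBD] by simp
qed

end


context gwU begin

lemma conv_P: "(\<lambda>n. Ph j n m / a n) \<longlonglongrightarrow> real m * mu j m"
proof (rule order_tendstoI)
  fix y assume y: "y < real m * mu j m"
  define c where "c = (y + real m * mu j m) / 2"
  have "c < real m * mu j m" "y < c" using y by (auto simp: c_def)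
  then have "eventually (\<lambda>n. c * a n \<le> Ph j n m) sequentially" using LB_Ph[of j m] by (simp add: LB_def)
  then show "eventually (\<lambda>n. y < Ph j n m / a n) sequentially"
  proof eventually_elim
    case (elim n)
    then have "c \<le> Ph j n m / a n" using a_pos[of n] by (simp add: field_simps)
    then show ?case using \<open>y < c\<close> by simp
  qed
next
  fix y assume y: "real m * mu j m < y"
  define e where "e = y - real m * mu j m"
  have e: "e > 0" using y by (simp add: e_def)
  have "(\<lambda>M. \<Sum>m'\<le>M. real m' * mu j m') \<longlonglongrightarrow> 1"
    using summable_LIMSEQ'[OF sums_summable[OF mu_mean[of j]]] sums_unique[OF mu_mean[of j]] by simp
  then have "eventually (\<lambda>M. 1 - e/2 < (\<Sum>m'\<le>M. real m' * mu j m')) sequentially"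
    using e by (simp add: order_tendsto_iff)
  moreover have "eventually (\<lambda>M. m \<le> M) sequentially" by (rule eventually_ge_at_top)
  ultimately have "eventually (\<lambda>M. 1 - e/2 < (\<Sum>m'\<le>M. real m' * mu j m') \<and> m \<le> M) sequentially" by eventually_elim auto
  then obtain M where M1: "1 - e/2 < (\<Sum>m'\<le>M. real m' * mu j m')" and M2: "m \<le> M"
    by (auto simp: eventually_sequentially)
  define T where "T = (\<Sum>m'\<in>{..M} - {m}. real m' * mu j m')"
  have Tsplit: "(\<Sum>m'\<le>M. real m' * mu j m') = real m * mu j m + T"
    unfolding T_def using M2 by (subst sum.remove[of _ m]) auto
  have LBT: "LB (\<lambda>n. \<Sum>m'\<in>{..M} - {m}. Ph j n m') T"
    unfolding T_def by (rule LB_sum) (auto intro: LB_Ph)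
  have cT: "1 - real m * mu j m - e/2 < T" using M1 Tsplit by simp
  then have "eventually (\<lambda>n. (1 - real m * mu j m - e/2) * a n \<le> (\<Sum>m'\<in>{..M} - {m}. Ph j n m')) sequentially"
    using LBT by (simp add: LB_def)
  moreover have "eventually (\<lambda>n. M \<le> n) sequentially" by (rule eventually_ge_at_top)
  ultimately show "eventually (\<lambda>n. Ph j n m / a n < y) sequentially"
  proof eventually_elim
    case (elim n)
    have "(\<Sum>m'\<le>M. Ph j n m') \<le> (\<Sum>m'\<le>n+1. Ph j n m')"
      by (rule sum_mono2) (use elim in \<open>auto simp: Ph_nonneg\<close>)
    also have "\<dots> = a n" by (rule sum_Ph)
    finally have "Ph j n m + (\<Sum>m'\<in>{..M} - {m}. Ph j n m') \<le> a n"
      using M2 by (subst (asm) sum.remove[of _ m]) auto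
    then have "Ph j n m \<le> (real m * mu j m + e/2) * a n"
      using elim(1) by (simp add: algebra_simps)
    also have "\<dots> < y * a n"
    proof (rule mult_strict_right_mono[OF _ a_pos])
      show "real m * mu j m + e/2 < y" unfolding e_def using y by (simp add: field_simps)
    qed
    finally show ?case using a_pos[of n] by (simp add: field_simps)
  qed
qed

lemma sum_by_level: "(\<Sum>t\<in>TS n. gw_weight p t * g (level j t)) = (\<Sum>m\<le>n+1. Ph j n m * g m)"
proof -
  have "(\<Sum>t\<in>TS n. gw_weight p t * g (level j t)) = (\<Sum>t\<in>TS n. \<Sum>m\<le>n+1. if level j t = m then gw_weight p t * g m else 0)"
  proof (rule sum.cong[OF refl])
    fix t assume "t \<in> TS n"
    then have "level j t \<in> {..n+1}" using level_le[of j t] by (auto simp: TS_def)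
    then show "gw_weight p t * g (level j t) = (\<Sum>m\<le>n+1. if level j t = m then gw_weight p t * g m else 0)"
      by (simp add: sum.delta)
  qed
  also have "\<dots> = (\<Sum>m\<le>n+1. \<Sum>t\<in>TS n. if level j t = m then gw_weight p t * g m else 0)"
    by (rule sum.swap)
  also have "\<dots> = (\<Sum>m\<le>n+1. Ph j n m * g m)"
    unfolding Ph_def Phi_def by (simp add: sum.inter_filter[symmetric] finite_TS sum_distrib_right)
  finally show ?thesis .
qed

lemma main_lim: "(\<lambda>n. (\<Sum>m\<le>n+1. Ph j n m * (1 / real m)) / a n) \<longlonglongrightarrow> (\<Sum>m. mu j (Suc m))"
proof -
  define f where "f n = (\<Sum>m\<le>n+1. Ph j n m * (1 / real m)) / a n" for n
  define Q where "Q M n = (\<Sum>m\<in>{1..M}. Ph j n m / a n * (1 / real m))" for M n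
  define rho where "rho = (\<Sum>m. mu j (Suc m))"
  have smu: "summable (\<lambda>m. mu j (Suc m))" using mu_total(1)[of j] by (simp add: summable_Suc_iff)
  have Qlim: "Q M \<longlonglongrightarrow> (\<Sum>m<M. mu j (Suc m))" for M
  proof -
    have "Q M \<longlonglongrightarrow> (\<Sum>m\<in>{1..M}. real m * mu j m * (1 / real m))"
      unfolding Q_def[abs_def] by (intro tendsto_sum tendsto_mult tendsto_const conv_P)
    moreover have "(\<Sum>m\<in>{1..M}. real m * mu j m * (1 / real m)) = (\<Sum>m\<in>{Suc 0..M}. mu j m)"
      by (rule sum.cong) auto
    moreover have "(\<Sum>m\<in>{Suc 0..M}. mu j m) = (\<Sum>m<M. mu j (Suc m))"
      by (rule sum.atLeast1_atMost_eq)
    ultimately show ?thesis by simp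
  qed
  have fn: "f n = (\<Sum>m\<le>n+1. Ph j n m / a n * (1 / real m))" for n
    unfolding f_def sum_divide_distrib by (rule sum.cong) auto
  have lower: "Q M n \<le> f n" if "M \<le> n + 1" for M n
    unfolding fn Q_def
    by (rule sum_mono2) (use that a_pos[of n] Ph_nonneg in auto)
  have upper: "f n \<le> Q M n + 1 / real (Suc M)" if "M \<le> n + 1" for M n
  proof -
    have "f n \<le> (\<Sum>m\<le>n+1. (if m \<in> {1..M} then Ph j n m / a n * (1 / real m) else 0) + Ph j n m / a n * (1 / real (Suc M)))"
      unfolding fn
    proof (rule sum_mono)
      fix m assume "m \<in> {..n+1}"
      have nn: "Ph j n m / a n \<ge> 0" using a_pos[of n] Ph_nonneg by simp
      have nn2: "Ph j n m / a n * (1 / real (Suc M)) \<ge> 0" by (rule mult_nonneg_nonneg[OF nn]) simp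
      show "Ph j n m / a n * (1 / real m) \<le> (if m \<in> {1..M} then Ph j n m / a n * (1 / real m) else 0) + Ph j n m / a n * (1 / real (Suc M))"
      proof (cases "m \<in> {1..M}")
        case True
        then show ?thesis using nn2 by simp
      next
        case False
        then have "m = 0 \<or> m \<ge> Suc M" by auto
        then show ?thesis
        proof
          assume "m = 0" then show ?thesis using nn2 by simp
        next
          assume m: "m \<ge> Suc M"
          have "1 / real m \<le> 1 / real (Suc M)" using m by (intro divide_left_mono) auto
          then have "Ph j n m / a n * (1 / real m) \<le> Ph j n m / a n * (1 / real (Suc M))"
            by (rule mult_left_mono[OF _ nn])
          then show ?thesis using False by (simp only: if_False)
        qed
      qed
    qed
    also have "\<dots> = Q M n + (\<Sum>m\<le>n+1. Ph j n m) / a n * (1 / real (Suc M))"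
    proof -
      have "(\<Sum>m\<le>n+1. (if m \<in> {1..M} then Ph j n m / a n * (1 / real m) else 0)) = Q M n"
        unfolding Q_def sum.inter_filter[OF finite_atMost, symmetric]
        by (rule sum.cong) (use that in auto)
      moreover have "(\<Sum>m\<le>n+1. Ph j n m / a n * (1 / real (Suc M))) = (\<Sum>m\<le>n+1. Ph j n m) / a n * (1 / real (Suc M))"
        by (simp only: sum_divide_distrib sum_distrib_right)
      ultimately show ?thesis by (simp only: sum.distrib)
    qed
    also have "\<dots> = Q M n + 1 / real (Suc M)" unfolding sum_Ph using a_pos[of n] by simp
    finally show ?thesis .
  qed
  have "f \<longlonglongrightarrow> rho"
  proof (rule order_tendstoI)
    fix y assume y: "y < rho"
    have "(\<lambda>M. \<Sum>m<M. mu j (Suc m)) \<longlonglongrightarrow> rho" unfolding rho_def by (rule summable_LIMSEQ[OF smu])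
    then have "eventually (\<lambda>M. y < (\<Sum>m<M. mu j (Suc m))) sequentially" using y by (simp add: order_tendsto_iff)
    then obtain M where M: "y < (\<Sum>m<M. mu j (Suc m))" by (auto simp: eventually_sequentially)
    then have "eventually (\<lambda>n. y < Q M n) sequentially" using Qlim[of M] by (simp add: order_tendsto_iff)
    moreover have "eventually (\<lambda>n. M \<le> n + 1) sequentially" using eventually_ge_at_top[of M] by eventually_elim simp
    ultimately show "eventually (\<lambda>n. y < f n) sequentially"
      by eventually_elim (use lower in fastforce)
  next
    fix y assume y: "rho < y"
    define e where "e = y - rho"
    have e: "e > 0" using y by (simp add: e_def)
    obtain M where M: "inverse (real (Suc M)) < e / 2" using e by (metis half_gt_zero reals_Archimedean)
    have "(\<Sum>m<M. mu j (Suc m)) \<le> rho" unfolding rho_def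
      by (rule sum_le_suminf[OF smu]) (auto intro: mu_nonneg)
    then have "(\<Sum>m<M. mu j (Suc m)) < rho + e/2" using e by simp
    then have "eventually (\<lambda>n. Q M n < rho + e/2) sequentially" using Qlim[of M] by (simp add: order_tendsto_iff)
    moreover have "eventually (\<lambda>n. M \<le> n + 1) sequentially" using eventually_ge_at_top[of M] by eventually_elim simp
    ultimately show "eventually (\<lambda>n. f n < y) sequentially"
    proof eventually_elim
      case (elim n)
      have "f n \<le> Q M n + 1 / real (Suc M)" by (rule upper[OF elim(2)])
      also have "\<dots> < rho + e/2 + e/2" using elim(1) M by (simp add: inverse_eq_divide)
      finally show ?case by (simp add: e_def)
    qed
  qed
  then show ?thesis by (simp add: f_def[abs_def] rho_def)
qed

end


lemma deriv_g_lemma: fixes b x :: real assumes nz: "1 - b*x \<noteq> 0"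
  shows "((\<lambda>x. b + (1-b)^2 * x / (1 - b*x)) has_real_derivative (1-b)^2 / (1 - b*x)^2) (at x)"
proof -
  have "((\<lambda>x. x / (1 - b*x)) has_real_derivative (1 * (1 - b*x) - x * (0 - b * 1)) / ((1 - b*x) * (1 - b*x))) (at x)"
    by (intro DERIV_divide DERIV_ident DERIV_diff DERIV_const DERIV_cmult nz)
  then have "((\<lambda>x. x / (1 - b*x)) has_real_derivative 1 / (1 - b*x)^2) (at x)"
    by (simp add: power2_eq_square algebra_simps)
  then have "((\<lambda>x. b + (1-b)^2 * (x / (1 - b*x))) has_real_derivative 0 + (1-b)^2 * (1 / (1 - b*x)^2)) (at x)"
    by (intro DERIV_add DERIV_const DERIV_cmult)
  then show ?thesis by simp
qed
lemma aux_d: fixes y c b :: real assumes "y \<noteq> 0"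
  shows "(0 * y^2 - c * (of_nat 2 * ((0 - b * 1) * y^(2 - Suc 0)))) / (y^2 * y^2) = 2 * b * c / y^3"
  using assms by (simp add: field_simps power2_eq_square power3_eq_cube)

lemma deriv_h_lemma: fixes b x :: real assumes nz: "1 - b*x \<noteq> 0"
  shows "((\<lambda>x. (1-b)^2 / (1 - b*x)^2) has_real_derivative 2 * b * (1-b)^2 / (1 - b*x)^3) (at x)"
proof -
  have d1: "((\<lambda>x. (1 - b*x)^2) has_real_derivative of_nat 2 * ((0 - b * 1) * (1 - b*x)^(2 - Suc 0))) (at x)"
    by (intro DERIV_power DERIV_diff DERIV_const DERIV_cmult DERIV_ident)
  have "((\<lambda>x. (1-b)^2 / (1 - b*x)^2) has_real_derivative (0 * (1 - b*x)^2 - (1-b)^2 * (of_nat 2 * ((0 - b * 1) * (1 - b*x)^(2 - Suc 0)))) / ((1 - b*x)^2 * (1 - b*x)^2)) (at x)"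
    by (intro DERIV_divide DERIV_const d1) (use nz in simp)
  moreover have "(0 * (1 - b*x)^2 - (1-b)^2 * (of_nat 2 * ((0 - b * 1) * (1 - b*x)^(2 - Suc 0)))) / ((1 - b*x)^2 * (1 - b*x)^2) = 2 * b * (1-b)^2 / (1 - b*x)^3"
    using aux_d[OF nz, of "(1-b)^2" b] by simp
  ultimately show ?thesis by simp
qed

context gwU begin

lemma gw_sum: "(\<Sum>T\<in>{T. edges T = Suc n}. gw p T * F T) = (\<Sum>t\<in>TS n. gw_weight p t * F (Node [t]))"
proof -
  have sub: "(\<lambda>t. Node [t]) ` TS n \<subseteq> {T. edges T = Suc n}" by (auto simp: TS_def)
  have fin: "finite {T. edges T = Suc n}" using finite_TS[of "Suc n"] by (simp add: TS_def)
  have "(\<Sum>T\<in>{T. edges T = Suc n}. gw p T * F T) = (\<Sum>T\<in>(\<lambda>t. Node [t]) ` TS n. gw p T * F T)"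
  proof (rule sum.mono_neutral_right[OF fin sub], intro ballI)
    fix T assume T: "T \<in> {T. edges T = Suc n} - (\<lambda>t. Node [t]) ` TS n"
    obtain cs where Tc: "T = Node cs" by (cases T)
    have "gw p T = 0"
    proof (cases cs)
      case Nil then show ?thesis using Tc by (simp add: gw_def)
    next
      case (Cons t rest)
      show ?thesis
      proof (cases rest)
        case Nil
        then have "T = Node [t]" "t \<in> TS n" using Tc Cons T by (auto simp: TS_def)
        then show ?thesis using T by auto
      next
        case (Cons u rest')
        then show ?thesis using Tc \<open>cs = t # rest\<close> by (simp add: gw_def)
      qed
    qed
    then show "gw p T * F T = 0" by simp
  qed
  also have "\<dots> = (\<Sum>t\<in>TS n. gw p (Node [t]) * F (Node [t]))"
    by (rule sum.reindex_cong[where l = "\<lambda>t. Node [t]"]) (auto simp: inj_on_def)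
  also have "\<dots> = (\<Sum>t\<in>TS n. gw_weight p t * F (Node [t]))" by (simp add: gw_def)
  finally show ?thesis .
qed

lemma cond_exp_eq: "gw_cond_exp p (Suc n) (\<lambda>T. 1 / real (level (Suc j) T)) = (\<Sum>m\<le>n+1. Ph j n m * (1 / real m)) / a n"
proof -
  have num: "(\<Sum>T\<in>{T. edges T = Suc n}. gw p T * (1 / real (level (Suc j) T))) = (\<Sum>m\<le>n+1. Ph j n m * (1 / real m))"
    unfolding gw_sum using sum_by_level[where n=n and g="\<lambda>m. 1 / real m" and j=j] by simp
  have den: "(\<Sum>T\<in>{T. edges T = Suc n}. gw p T) = a n"
    using gw_sum[where n=n and F="\<lambda>T. 1"] by (simp add: a_def aa_def)
  show ?thesis unfolding gw_cond_exp_def num den ..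
qed

lemma limit_part: assumes "k \<ge> 1"
  shows "(\<lambda>N. gw_cond_exp p N (\<lambda>T. 1 / real (level k T))) \<longlonglongrightarrow> 1 / (1 + (real k - 1) * b / (1 - b))"
proof -
  obtain j where k: "k = Suc j" using assms by (cases k) auto
  have "(\<lambda>n. gw_cond_exp p (Suc n) (\<lambda>T. 1 / real (level k T))) \<longlonglongrightarrow> (\<Sum>m. mu j (Suc m))"
    unfolding k cond_exp_eq by (rule main_lim)
  then have "(\<lambda>n. gw_cond_exp p (Suc n) (\<lambda>T. 1 / real (level k T))) \<longlonglongrightarrow> 1 / (1 + (real k - 1) * b / (1 - b))"
    using rho[of j] k by simp
  then show ?thesis by (rule filterlim_sequentially_Suc[THEN iffD1])
qed

lemma p_sums_x: assumes bq: "norm (b*q) < 1"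
  shows "(\<lambda>d. p d * q^d) sums (b + (1-b)^2 * q / (1 - b*q))"
proof -
  have "(\<lambda>d. (1-b)^2 * q * (b*q)^d) sums ((1-b)^2 * q * (1 / (1 - b*q)))"
    by (intro sums_mult geometric_sums bq)
  moreover have "(\<lambda>d. (1-b)^2 * q * (b*q)^d) = (\<lambda>d. p (Suc d) * q^(Suc d))"
    by (rule ext) (simp add: p_Suc power_mult_distrib algebra_simps)
  ultimately have "(\<lambda>d. p (Suc d) * q^(Suc d)) sums ((1-b)^2 * q / (1 - b*q))" by simp
  then have "(\<lambda>d. p d * q^d) sums ((1-b)^2 * q / (1 - b*q) + p 0 * q^0)"
    by (subst (asm) sums_Suc_iff) simp
  then show ?thesis by (simp add: p_0 algebra_simps)
qed

lemma deriv_part: "deriv (deriv (fU b)) 1 = 2 * b / (1 - b)"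
proof -
  define g where "g x = b + (1-b)^2 * x / (1 - b*x)" for x :: real
  define h where "h x = (1-b)^2 / (1 - b*x)^2" for x :: real
  define U where "U = ball (0::real) (1/b)"
  have U: "open U" by (simp add: U_def)
  have inU: "\<bar>b * x\<bar> < 1" if "x \<in> U" for x
    using that b0 by (simp add: U_def abs_mult field_simps)
  have fg: "fU b x = g x" if "x \<in> U" for x
    using p_sums_x[of x] inU[OF that] by (simp add: fU_def g_def sums_iff)
  have gd: "(g has_real_derivative h x) (at x)" if "x \<in> U" for x
  proof -
    have nz: "1 - b*x \<noteq> 0" using inU[OF that] by auto
    show ?thesis unfolding g_def[abs_def] h_def by (rule deriv_g_lemma[OF nz])
  qed
  have dfU: "deriv (fU b) x = h x" if "x \<in> U" for x
  proof -
    have "eventually (\<lambda>y. y \<in> U) (nhds x)" by (rule eventually_nhds_in_open[OF U that])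
    then have "eventually (\<lambda>y. fU b y = g y) (nhds x)" by eventually_elim (rule fg)
    then have "deriv (fU b) x = deriv g x" by (rule deriv_cong_ev) simp
    also have "\<dots> = h x" by (rule DERIV_imp_deriv[OF gd[OF that]])
    finally show ?thesis .
  qed
  have one: "(1::real) \<in> U" using b0 b1 by (simp add: U_def field_simps)
  have "eventually (\<lambda>y. y \<in> U) (nhds 1)" by (rule eventually_nhds_in_open[OF U one])
  then have "eventually (\<lambda>y. deriv (fU b) y = h y) (nhds 1)" by eventually_elim (rule dfU)
  then have "deriv (deriv (fU b)) 1 = deriv h 1" by (rule deriv_cong_ev) simp
  also have "\<dots> = 2 * b * (1-b)^2 / (1 - b)^3"
  proof (rule DERIV_imp_deriv)
    have nz: "1 - b \<noteq> 0" using b1 by simp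
    show "(h has_real_derivative 2 * b * (1-b)^2 / (1 - b)^3) (at 1)"
      unfolding h_def[abs_def] using deriv_h_lemma[of b 1] nz by simp
  qed
  also have "\<dots> = 2 * b / (1 - b)"
  proof -
    have gen: "y \<noteq> 0 \<Longrightarrow> 2 * b * y^2 / y^3 = 2 * b / y" for y :: real
      by (simp add: power2_eq_square power3_eq_cube)
    show ?thesis using gen[of "1-b"] b1 by simp
  qed
  finally show ?thesis .
qed

end

theorem mainTheorem3:
  fixes b :: real and k :: nat
  assumes "0 < b" and "b < 1" and "k \<ge> 1"
  shows "((\<lambda>N. gw_cond_exp (pU b) N (\<lambda>T. 1 / real (Dcard k T)))
            \<longlonglongrightarrow> 1 / (1 + (real k - 1) * b / (1 - b)))
       \<and> 1 / (1 + (real k - 1) * b / (1 - b))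
           = 1 / (1 + deriv (deriv (fU b)) 1 * (real k - 1) / 2)"
proof -
  interpret gwU b using assms(1,2) by unfold_locales
  show ?thesis
  proof
    show "(\<lambda>N. gw_cond_exp (pU b) N (\<lambda>T. 1 / real (Dcard k T))) \<longlonglongrightarrow> 1 / (1 + (real k - 1) * b / (1 - b))"
      by (rule limit_part[OF assms(3)])
    show "1 / (1 + (real k - 1) * b / (1 - b)) = 1 / (1 + deriv (deriv (fU b)) 1 * (real k - 1) / 2)"
    proof -
      have "2 * b / (1 - b) * (real k - 1) / 2 = (real k - 1) * b / (1 - b)"
        using assms(2) by (simp add: field_simps)
      then show ?thesis unfolding deriv_part by simp
    qed
  qed
qed


end
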